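(* For all $0\le p\le t\le 1$, $\pi(p,t)=\sup\{\mathbf P(S_\gamma\ge t)\mid \gamma \text{ a finite stake sequence}\}$.
   Context: Let $\beta_1,\beta_2,\ldots$ be independent Bernoulli random variables with success probability $p$. A stake sequence is a sequence $\gamma=(c_1,c_2,\ldots)$ of non-negative reals with $c_1\ge c_2\ge\cdots$ and $\sum_i c_i=1$; it is finite if $c_i=0$ for all but finitely many $i$. Write $S_\gamma=\sum_i c_i\beta_i$. For $0\le p\le t\le 1$ define $\pi(p,t)=\sup\{\mathbf P(S_\gamma\ge t)\mid \gamma \text{ a stake sequence}\}$. *)

theory Defs
  imports "HOL-Probability.Probability"
begin

definition stake_seq :: "(nat \<Rightarrow> real) \<Rightarrow> bool" where
  "stake_seq c \<longleftrightarrow> (\<forall>i. 0 \<le> c i) \<and> decseq c \<and> c sums 1"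

definition finite_stake_seq :: "(nat \<Rightarrow> real) \<Rightarrow> bool" where
  "finite_stake_seq c \<longleftrightarrow> stake_seq c \<and> finite {i. c i \<noteq> 0}"

definition bern_space :: "real \<Rightarrow> (nat \<Rightarrow> bool) measure" where
  "bern_space p = PiM UNIV (\<lambda>i::nat. measure_pmf (bernoulli_pmf p))"

definition stake_sum :: "(nat \<Rightarrow> real) \<Rightarrow> (nat \<Rightarrow> bool) \<Rightarrow> real" where
  "stake_sum c \<omega> = (\<Sum>i. c i * (if \<omega> i then 1 else 0))"

definition win_prob :: "real \<Rightarrow> real \<Rightarrow> (nat \<Rightarrow> real) \<Rightarrow> real" where
  "win_prob p t c = measure (bern_space p) {\<omega> \<in> space (bern_space p). stake_sum c \<omega> \<ge> t}"

definition pi_fun :: "real \<Rightarrow> real \<Rightarrow> real" where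
  "pi_fun p t = Sup {win_prob p t c | c. stake_seq c}"

end

theory Submission
  imports Defs
begin


abbreviation Bp :: "real \<Rightarrow> bool measure" where "Bp p \<equiv> measure_pmf (bernoulli_pmf p)"

lemma space_bern[simp]: "space (bern_space p) = UNIV"
  by (simp add: bern_space_def space_PiM)

lemma sets_bern_comp: "(\<lambda>\<omega>. \<omega> i) \<in> measurable (bern_space p) (Bp p)"
  unfolding bern_space_def by (rule measurable_component_singleton) simp

lemma prob_bern: "prob_space (bern_space p)"
  unfolding bern_space_def by (rule prob_space_PiM) (simp add: prob_space_measure_pmf)

lemma meas_ss:
  assumes "\<And>i. (\<lambda>x. g x i) \<in> measurable N (count_space UNIV)"
  shows "(\<lambda>x. stake_sum c (g x)) \<in> borel_measurable N"
  unfolding stake_sum_def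
proof (rule borel_measurable_suminf)
  fix i
  have "(\<lambda>b. c i * (if b then 1 else 0 :: real)) \<in> measurable (count_space UNIV) borel" by simp
  from measurable_compose[OF assms[of i] this]
  show "(\<lambda>x. c i * (if g x i then 1 else 0)) \<in> borel_measurable N" by simp
qed

lemma comp_count: "(\<lambda>\<omega>. \<omega> i) \<in> measurable (PiM I (\<lambda>_. Bp p)) (count_space UNIV)"
  if "i \<in> I"
proof -
  have "(\<lambda>\<omega>. \<omega> i) \<in> measurable (PiM I (\<lambda>_. Bp p)) (Bp p)"
    using that by (rule measurable_component_singleton)
  moreover have "measurable (PiM I (\<lambda>_. Bp p)) (count_space UNIV) = measurable (PiM I (\<lambda>_. Bp p)) (Bp p)"
    by (rule measurable_cong_sets) auto
  ultimately show ?thesis by metis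
qed

lemma meas_S: "stake_sum c \<in> borel_measurable (bern_space p)"
  using meas_ss[of "\<lambda>x. x" "bern_space p" c] comp_count[of _ UNIV p]
  unfolding bern_space_def by simp

lemma prob_coord: "measure (bern_space p) {\<omega>. \<omega> i = b} = pmf (bernoulli_pmf p) b"
proof -
  interpret product_prob_space "\<lambda>_. Bp p" UNIV
    by unfold_locales (simp add: prob_space_measure_pmf)
  have "emeasure (bern_space p) {\<omega>. \<omega> i = b} = emeasure (Bp p) {b}"
    using emeasure_PiM_Collect_single[of i "{b}"] unfolding bern_space_def
    by (simp add: space_PiM)
  then show ?thesis
    by (simp add: measure_def emeasure_pmf_single)
qed




definition lac :: "(nat \<Rightarrow> real) \<Rightarrow> nat set \<Rightarrow> bool" where
  "lac c J \<longleftrightarrow> finite J \<and> (\<forall>j\<in>J. (\<Sum>i\<in>{i\<in>J. j<i}. c i) < c j)"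

lemma lac_exists:
  assumes pos: "\<And>i. c i > 0" and lim: "c \<longlonglongrightarrow> 0"
  shows "\<exists>J. lac c J \<and> card J = K"
proof (induction K)
  case 0
  show ?case by (rule exI[of _ "{}"]) (simp add: lac_def)
next
  case (Suc K)
  then obtain J where J: "lac c J" "card J = K" by blast
  have fin: "finite J" using J by (simp add: lac_def)
  define D where "D = insert 1 ((\<lambda>j. c j - (\<Sum>i\<in>{i\<in>J. j<i}. c i)) ` J)"
  define \<delta> where "\<delta> = Min D"
  have "finite D" "D \<noteq> {}" using fin by (auto simp: D_def)
  have "\<forall>d\<in>D. d > 0" using J by (auto simp: D_def lac_def)
  then have dpos: "\<delta> > 0" using \<open>finite D\<close> \<open>D \<noteq> {}\<close> by (simp add: \<delta>_def)
  have dle: "\<delta> \<le> c j - (\<Sum>i\<in>{i\<in>J. j<i}. c i)" if "j \<in> J" for j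
    unfolding \<delta>_def using \<open>finite D\<close> that by (intro Min_le) (auto simp: D_def)
  from lim dpos obtain N where N: "\<And>n. n \<ge> N \<Longrightarrow> norm (c n - 0) < \<delta>"
    by (metis LIMSEQ_D)
  define m where "m = max N (Suc (Max (insert 0 J)))"
  have mN: "c m < \<delta>" using N[of m] pos[of m] by (simp add: m_def)
  have mJ: "j < m" if "j \<in> J" for j
  proof -
    have "j \<le> Max (insert 0 J)" using fin that by simp
    then show ?thesis by (simp add: m_def)
  qed
  then have mnot: "m \<notin> J" by blast
  have "lac c (insert m J)"
    unfolding lac_def
  proof (intro conjI ballI)
    show "finite (insert m J)" using fin by simp
    fix j assume j: "j \<in> insert m J"
    show "(\<Sum>i\<in>{i \<in> insert m J. j < i}. c i) < c j"
    proof (cases "j = m")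
      case True
      then have "{i \<in> insert m J. j < i} = {}" using mJ by (auto dest!: mJ)
      then show ?thesis using pos[of j] by (simp only: sum.empty)
    next
      case False
      then have jJ: "j \<in> J" using j by simp
      have eq: "{i \<in> insert m J. j < i} = insert m {i \<in> J. j < i}" using mJ[OF jJ] by auto
      have "(\<Sum>i\<in>{i \<in> insert m J. j < i}. c i) = c m + (\<Sum>i\<in>{i \<in> J. j < i}. c i)"
        unfolding eq using fin mnot by (subst sum.insert) auto
      also have "\<dots> < c j" using mN dle[OF jJ] by linarith
      finally show ?thesis .
    qed
  qed
  moreover have "card (insert m J) = Suc K" using fin mnot J by simp
  ultimately show ?case by blast
qed

definition ind :: "bool \<Rightarrow> real" where "ind b = (if b then 1 else 0)"

lemma stake_summable:
  assumes "stake_seq c" shows "summable (\<lambda>i. c i * (if x i then 1 else 0))"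
proof -
  have "summable c" using assms by (auto simp: stake_seq_def sums_iff)
  then show ?thesis
    by (rule summable_comparison_test'[where N=0]) (use assms in \<open>auto simp: stake_seq_def\<close>)
qed

lemma lac_inj:
  assumes c: "stake_seq c" and L: "lac c J" and off: "\<And>i. i \<notin> J \<Longrightarrow> x i = y i"
    and eqS: "stake_sum c x = stake_sum c y"
  shows "\<forall>j\<in>J. x j = y j"
proof (rule ccontr)
  assume nt: "\<not> (\<forall>j\<in>J. x j = y j)"
  define Dset where "Dset = {i\<in>J. x i \<noteq> y i}"
  have fin: "finite J" using L by (simp add: lac_def)
  have "Dset \<noteq> {}" "finite Dset" using nt fin by (auto simp: Dset_def)
  define j where "j = Min Dset"
  have jD: "j \<in> Dset" using \<open>Dset \<noteq> {}\<close> \<open>finite Dset\<close> by (simp add: j_def)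
  have jmin: "i \<in> J \<Longrightarrow> i < j \<Longrightarrow> x i = y i" for i
    using Min_le[OF \<open>finite Dset\<close>, of i] by (force simp: Dset_def j_def)
  define f where "f i = c i * (if x i then 1 else 0) - c i * (if y i then 1 else 0)" for i
  have cnn: "c i \<ge> 0" for i using c by (simp add: stake_seq_def)
  have "stake_sum c x - stake_sum c y = suminf f"
    unfolding stake_sum_def f_def
    by (rule suminf_diff[OF stake_summable[OF c] stake_summable[OF c]])
  also have "\<dots> = (\<Sum>i\<in>J. f i)"
    by (rule suminf_finite[OF fin]) (simp add: f_def off)
  finally have z: "(\<Sum>i\<in>J. f i) = 0" using eqS by simp
  have jJ: "j \<in> J" using jD by (simp add: Dset_def)
  have Jsplit: "J = insert j {i\<in>J. j<i} \<union> {i\<in>J. i<j}" using jJ by auto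
  have "(\<Sum>i\<in>J. f i) = (\<Sum>i\<in>insert j {i\<in>J. j<i}. f i) + (\<Sum>i\<in>{i\<in>J. i<j}. f i)"
    by (subst Jsplit, rule sum.union_disjoint) (use fin in auto)
  also have "(\<Sum>i\<in>{i\<in>J. i<j}. f i) = 0"
    by (rule sum.neutral) (auto simp: f_def jmin)
  also have "(\<Sum>i\<in>insert j {i\<in>J. j<i}. f i) = f j + (\<Sum>i\<in>{i\<in>J. j<i}. f i)"
    by (rule sum.insert) (use fin in auto)
  finally have z2: "f j + (\<Sum>i\<in>{i\<in>J. j<i}. f i) = 0" using z by simp
  have fj: "\<bar>f j\<bar> = c j" using jD cnn[of j] by (auto simp: Dset_def f_def)
  have "\<bar>\<Sum>i\<in>{i\<in>J. j<i}. f i\<bar> \<le> (\<Sum>i\<in>{i\<in>J. j<i}. \<bar>f i\<bar>)" by (rule sum_abs)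
  also have "\<dots> \<le> (\<Sum>i\<in>{i\<in>J. j<i}. c i)"
    by (rule sum_mono) (use cnn in \<open>auto simp: f_def\<close>)
  also have "\<dots> < c j" using L jJ by (simp add: lac_def)
  finally show False using z2 fj by linarith
qed




lemma meas_merge:
  "(\<lambda>x. stake_sum c (\<lambda>i. if i \<in> J then \<sigma> i else x i)) \<in> borel_measurable (PiM (-J) (\<lambda>_. Bp p))"
proof (rule meas_ss)
  fix i show "(\<lambda>x. if i \<in> J then \<sigma> i else x i) \<in> measurable (PiM (-J) (\<lambda>_. Bp p)) (count_space UNIV)"
    by (cases "i \<in> J") (auto intro: comp_count)
qed

lemma atom_bound:
  assumes c: "stake_seq c" and L: "lac c J" and p: "0 \<le> p" "p \<le> 1"
  shows "measure (bern_space p) {\<omega>. stake_sum c \<omega> = t} \<le> (max p (1-p)) ^ card J"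
proof -
  let ?M = "bern_space p"
  let ?q = "max p (1-p)"
  interpret prob_space ?M by (rule prob_bern)
  interpret PP: product_prob_space "\<lambda>_. Bp p" UNIV
    by unfold_locales (simp add: prob_space_measure_pmf)
  have fin: "finite J" using L by (simp add: lac_def)
  define P where "P = PiE J (\<lambda>_. UNIV :: bool set)"
  have finP: "finite P" using fin by (simp add: P_def finite_PiE)
  define A where "A \<sigma> = {\<omega>::nat\<Rightarrow>bool. \<forall>j\<in>J. \<omega> j = \<sigma> j}" for \<sigma> :: "nat \<Rightarrow> bool"
  define mg where "mg \<sigma> \<omega> = (\<lambda>i. if i \<in> J then \<sigma> i else \<omega> i)" for \<sigma> \<omega> :: "nat \<Rightarrow> bool"
  define Bs where "Bs \<sigma> = {\<omega>. stake_sum c (mg \<sigma> \<omega>) = t}" for \<sigma>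
  define Xa where "Xa \<sigma> = PiE J (\<lambda>j. {\<sigma> j})" for \<sigma> :: "nat \<Rightarrow> bool"
  define Xb where "Xb \<sigma> = (\<lambda>x. stake_sum c (\<lambda>i. if i \<in> J then \<sigma> i else x i)) -` {t} \<inter> space (PiM (-J) (\<lambda>_. Bp p))" for \<sigma>
  have Xa_sets: "Xa \<sigma> \<in> sets (PiM J (\<lambda>_. Bp p))" for \<sigma>
    unfolding Xa_def using fin by (intro sets_PiM_I_finite) auto
  have Xb_sets: "Xb \<sigma> \<in> sets (PiM (-J) (\<lambda>_. Bp p))" for \<sigma>
    unfolding Xb_def by (rule borel_measurable_vimage[OF meas_merge])
  have M_eq: "?M = PiM UNIV (\<lambda>_. Bp p)" by (simp add: bern_space_def)
  have ind: "indep_vars (\<lambda>_. Bp p) (\<lambda>i \<omega>. \<omega> i) UNIV"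
  proof (subst indep_vars_iff_distr_eq_PiM)
    show "random_variable (Bp p) (\<lambda>\<omega>. \<omega> i)" for i by (rule sets_bern_comp)
    have "distr ?M (Pi\<^sub>M UNIV (\<lambda>i. Bp p)) (\<lambda>x. \<lambda>i\<in>UNIV. x i) = ?M"
      by (simp add: restrict_UNIV M_eq)
    moreover have "(\<lambda>i::nat. distr ?M (Bp p) (\<lambda>\<omega>. \<omega> i)) = (\<lambda>i. Bp p)"
      unfolding M_eq by (intro ext distr_PiM_component) (auto simp: prob_space_measure_pmf)
    ultimately show "distr ?M (Pi\<^sub>M UNIV (\<lambda>i. Bp p)) (\<lambda>x. \<lambda>i\<in>UNIV. x i) =
        Pi\<^sub>M UNIV (\<lambda>i. distr ?M (Bp p) (\<lambda>\<omega>. \<omega> i))" by (simp add: M_eq)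
  qed simp
  have iv: "indep_var (PiM J (\<lambda>_. Bp p)) (\<lambda>\<omega>. restrict (\<lambda>i. \<omega> i) J)
                      (PiM (-J) (\<lambda>_. Bp p)) (\<lambda>\<omega>. restrict (\<lambda>i. \<omega> i) (-J))"
    by (rule indep_var_restrict[OF ind]) auto
  have preA: "(\<lambda>\<omega>. restrict (\<lambda>i. \<omega> i) J) -` Xa \<sigma> \<inter> space ?M = A \<sigma>" for \<sigma>
  proof -
    have "restrict \<omega> J \<in> Xa \<sigma> \<longleftrightarrow> \<omega> \<in> A \<sigma>" for \<omega>
      unfolding Xa_def A_def PiE_iff by simp
    then show ?thesis by (simp only: space_bern vimage_def Int_UNIV_right) blast
  qed
  have preB: "(\<lambda>\<omega>. restrict (\<lambda>i. \<omega> i) (-J)) -` Xb \<sigma> \<inter> space ?M = Bs \<sigma>" for \<sigma>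
  proof -
    have "mg \<sigma> \<omega> = (\<lambda>i. if i \<in> J then \<sigma> i else restrict \<omega> (-J) i)" for \<omega>
      by (auto simp: mg_def)
    moreover have "restrict \<omega> (-J) \<in> space (PiM (-J) (\<lambda>_. Bp p))" for \<omega>
      by (simp add: space_PiM)
    ultimately have "restrict \<omega> (-J) \<in> Xb \<sigma> \<longleftrightarrow> \<omega> \<in> Bs \<sigma>" for \<omega>
      unfolding Xb_def Bs_def by simp
    then show ?thesis by (simp only: space_bern vimage_def Int_UNIV_right) blast
  qed
  have preAB: "(\<lambda>\<omega>. (restrict (\<lambda>i. \<omega> i) J, restrict (\<lambda>i. \<omega> i) (-J))) -` (Xa \<sigma> \<times> Xb \<sigma>) \<inter> space ?M
      = A \<sigma> \<inter> Bs \<sigma>" for \<sigma>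
    using preA[of \<sigma>] preB[of \<sigma>] by (simp only: space_bern vimage_def Int_UNIV_right) blast
  have rvA: "random_variable (PiM J (\<lambda>_. Bp p)) (\<lambda>\<omega>. restrict (\<lambda>i. \<omega> i) J)"
    unfolding bern_space_def by (rule measurable_restrict, rule measurable_component_singleton) simp
  have rvB: "random_variable (PiM (-J) (\<lambda>_. Bp p)) (\<lambda>\<omega>. restrict (\<lambda>i. \<omega> i) (-J))"
    unfolding bern_space_def by (rule measurable_restrict, rule measurable_component_singleton) simp
  have A_sets: "A \<sigma> \<in> sets ?M" for \<sigma>
    using measurable_sets[OF rvA Xa_sets[of \<sigma>]] preA[of \<sigma>] by simp
  have B_sets: "Bs \<sigma> \<in> sets ?M" for \<sigma>
    using measurable_sets[OF rvB Xb_sets[of \<sigma>]] preB[of \<sigma>] by simp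
  have prodAB: "prob (A \<sigma> \<inter> Bs \<sigma>) = prob (A \<sigma>) * prob (Bs \<sigma>)" for \<sigma>
    using indep_varD[OF iv Xa_sets Xb_sets, of \<sigma> \<sigma>] unfolding preAB preA preB .
  have probA: "prob (A \<sigma>) \<le> ?q ^ card J" for \<sigma>
  proof -
    have "emeasure ?M {x\<in>space ?M. \<forall>i\<in>J. x i \<in> {\<sigma> i}} = (\<Prod>i\<in>J. emeasure (Bp p) {\<sigma> i})"
      unfolding M_eq by (rule PP.emeasure_PiM_Collect) (use fin in auto)
    moreover have "{x\<in>space ?M. \<forall>i\<in>J. x i \<in> {\<sigma> i}} = A \<sigma>" by (simp add: A_def)
    moreover have "(\<Prod>i\<in>J. emeasure (Bp p) {\<sigma> i}) = ennreal (\<Prod>i\<in>J. pmf (bernoulli_pmf p) (\<sigma> i))"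
      by (simp add: emeasure_pmf_single prod_ennreal)
    ultimately have "emeasure ?M (A \<sigma>) = ennreal (\<Prod>i\<in>J. pmf (bernoulli_pmf p) (\<sigma> i))" by simp
    then have "prob (A \<sigma>) = (\<Prod>i\<in>J. pmf (bernoulli_pmf p) (\<sigma> i))"
      by (simp add: measure_def prod_nonneg)
    also have "\<dots> \<le> (\<Prod>i\<in>J. ?q)"
    proof (rule prod_mono)
      fix i show "0 \<le> pmf (bernoulli_pmf p) (\<sigma> i) \<and> pmf (bernoulli_pmf p) (\<sigma> i) \<le> ?q"
        using p by (cases "\<sigma> i") auto
    qed
    finally show ?thesis by simp
  qed
  have disj: "disjoint_family_on Bs P"
    unfolding disjoint_family_on_def
  proof (intro ballI impI)
    fix \<sigma> \<sigma>' assume s: "\<sigma> \<in> P" "\<sigma>' \<in> P" "\<sigma> \<noteq> \<sigma>'"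
    show "Bs \<sigma> \<inter> Bs \<sigma>' = {}"
    proof (rule ccontr)
      assume "Bs \<sigma> \<inter> Bs \<sigma>' \<noteq> {}"
      then obtain \<omega> where w: "\<omega> \<in> Bs \<sigma>" "\<omega> \<in> Bs \<sigma>'" by blast
      have "\<forall>j\<in>J. mg \<sigma> \<omega> j = mg \<sigma>' \<omega> j"
        by (rule lac_inj[OF c L]) (use w in \<open>auto simp: Bs_def mg_def\<close>)
      then have "\<forall>j\<in>J. \<sigma> j = \<sigma>' j" by (simp add: mg_def)
      then have "\<sigma> = \<sigma>'" using s(1,2) by (auto simp: P_def PiE_iff extensional_def fun_eq_iff)
      then show False using s(3) by simp
    qed
  qed
  have cover: "{\<omega>. stake_sum c \<omega> = t} \<subseteq> (\<Union>\<sigma>\<in>P. A \<sigma> \<inter> Bs \<sigma>)"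
  proof
    fix \<omega> assume "\<omega> \<in> {\<omega>. stake_sum c \<omega> = t}"
    moreover have "mg (restrict \<omega> J) \<omega> = \<omega>" by (auto simp: mg_def)
    ultimately have "\<omega> \<in> A (restrict \<omega> J) \<inter> Bs (restrict \<omega> J)" by (auto simp: A_def Bs_def)
    moreover have "restrict \<omega> J \<in> P" by (simp add: P_def)
    ultimately show "\<omega> \<in> (\<Union>\<sigma>\<in>P. A \<sigma> \<inter> Bs \<sigma>)" by blast
  qed
  have "prob {\<omega>. stake_sum c \<omega> = t} \<le> prob (\<Union>\<sigma>\<in>P. A \<sigma> \<inter> Bs \<sigma>)"
    by (rule finite_measure_mono[OF cover]) (use finP A_sets B_sets in auto)
  also have "\<dots> \<le> (\<Sum>\<sigma>\<in>P. prob (A \<sigma> \<inter> Bs \<sigma>))"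
    by (rule finite_measure_subadditive_finite) (use finP A_sets B_sets in auto)
  also have "\<dots> \<le> (\<Sum>\<sigma>\<in>P. ?q ^ card J * prob (Bs \<sigma>))"
    unfolding prodAB by (rule sum_mono, rule mult_right_mono[OF probA]) simp
  also have "\<dots> = ?q ^ card J * prob (\<Union>\<sigma>\<in>P. Bs \<sigma>)"
    by (subst finite_measure_finite_Union[OF finP _ disj]) (use B_sets in \<open>auto simp: sum_distrib_left\<close>)
  also have "\<dots> \<le> ?q ^ card J * 1"
    by (rule mult_left_mono) (auto)
  finally show ?thesis by simp
qed




lemma sets_S:
  "{\<omega>. t \<le> stake_sum c \<omega>} \<in> sets (bern_space p)"
  "{\<omega>. t < stake_sum c \<omega>} \<in> sets (bern_space p)"
  "{\<omega>. stake_sum c \<omega> = t} \<in> sets (bern_space p)"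
proof -
  have m: "stake_sum c \<in> borel_measurable (bern_space p)" by (rule meas_S)
  show "{\<omega>. t \<le> stake_sum c \<omega>} \<in> sets (bern_space p)"
    using measurable_sets[OF m, of "{t..}"] by (simp add: vimage_def)
  show "{\<omega>. t < stake_sum c \<omega>} \<in> sets (bern_space p)"
    using measurable_sets[OF m, of "{t<..}"] by (simp add: vimage_def)
  show "{\<omega>. stake_sum c \<omega> = t} \<in> sets (bern_space p)"
    using borel_measurable_vimage[OF m, of t] by (simp add: vimage_def)
qed

lemma sets_coord: "{\<omega>. \<omega> i = b} \<in> sets (bern_space p)"
  using measurable_sets[OF sets_bern_comp[of i p], of "{b}"] by (simp add: vimage_def)

lemma stake_c0:
  assumes "stake_seq c" shows "c 0 > 0"
proof (rule ccontr)
  assume "\<not> c 0 > 0"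
  then have "c 0 = 0" using assms by (simp add: stake_seq_def) (meson not_less order_antisym)
  then have "c i = 0" for i using assms
    by (auto simp: stake_seq_def decseq_def intro!: order_antisym) (metis le0)
  then have "c = (\<lambda>_. 0)" by auto
  then have "c sums 0" by simp
  with assms show False by (simp add: stake_seq_def) (metis sums_unique2 zero_neq_one)
qed

lemma trunc:
  assumes c: "stake_seq c"
  shows "\<exists>c'. finite_stake_seq c' \<and>
     measure (bern_space p) {\<omega>. t < (\<Sum>i<Suc n. c i * (if \<omega> i then 1 else 0))} \<le> win_prob p t c'"
proof -
  interpret prob_space "bern_space p" by (rule prob_bern)
  have cnn: "c i \<ge> 0" for i using c by (simp add: stake_seq_def)
  have sc: "summable c" and sc1: "suminf c = 1" using c by (auto simp: stake_seq_def sums_iff)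
  define s where "s = (\<Sum>i<Suc n. c i)"
  have "c 0 \<le> s" unfolding s_def by (rule member_le_sum) (auto simp: cnn)
  then have spos: "s > 0" using stake_c0[OF c] by simp
  have sle: "s \<le> 1" unfolding s_def using sum_le_suminf[OF sc, of "{..<Suc n}"] cnn sc1 by simp
  define c' where "c' i = (if i < Suc n then c i / s else 0)" for i
  have fs: "finite_stake_seq c'"
    unfolding finite_stake_seq_def stake_seq_def
  proof (intro conjI allI)
    fix i show "0 \<le> c' i" using cnn spos by (simp add: c'_def)
  next
    show "decseq c'"
    proof (rule decseq_SucI)
      fix i
      have "c (Suc i) \<le> c i" using c by (simp add: stake_seq_def decseq_Suc_iff)
      then show "c' (Suc i) \<le> c' i" using spos cnn[of i]
        by (auto simp: c'_def divide_right_mono)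
    qed
  next
    have "c' sums (\<Sum>i<Suc n. c' i)" by (rule sums_finite) (auto simp: c'_def)
    moreover have "(\<Sum>i<Suc n. c' i) = 1"
      using spos by (simp add: c'_def s_def sum_divide_distrib[symmetric])
    ultimately show "c' sums 1" by simp
  next
    show "finite {i. c' i \<noteq> 0}"
      by (rule finite_subset[of _ "{..<Suc n}"]) (auto simp: c'_def)
  qed
  define part where "part \<omega> = (\<Sum>i<Suc n. c i * (if \<omega> i then 1 else 0 :: real))" for \<omega> :: "nat \<Rightarrow> bool"
  have ss: "stake_sum c' \<omega> = part \<omega> / s" for \<omega>
  proof -
    have "stake_sum c' \<omega> = (\<Sum>i<Suc n. c' i * (if \<omega> i then 1 else 0))"
      unfolding stake_sum_def by (rule suminf_finite) (auto simp: c'_def)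
    also have "\<dots> = (\<Sum>i<Suc n. c i * (if \<omega> i then 1 else 0) / s)"
      by (rule sum.cong) (auto simp: c'_def)
    finally show ?thesis by (simp add: part_def sum_divide_distrib[symmetric])
  qed
  have pnn: "part \<omega> \<ge> 0" for \<omega> unfolding part_def by (rule sum_nonneg) (simp add: cnn)
  have "part \<omega> \<le> part \<omega> / s" for \<omega>
    using spos sle pnn[of \<omega>] by (simp add: le_divide_eq mult_left_le)
  then have sub: "{\<omega>. t < part \<omega>} \<subseteq> {\<omega>. t \<le> stake_sum c' \<omega>}"
    using ss by (auto intro: order.trans[OF less_imp_le])
  have "measure (bern_space p) {\<omega>. t < part \<omega>} \<le> win_prob p t c'"
    unfolding win_prob_def using finite_measure_mono[OF sub sets_S(1)] by simp
  then show ?thesis using fs unfolding part_def by blast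
qed

lemma gt_bound:
  assumes c: "stake_seq c" and F: "\<And>c'. finite_stake_seq c' \<Longrightarrow> win_prob p t c' \<le> B"
  shows "measure (bern_space p) {\<omega>. t < stake_sum c \<omega>} \<le> B"
proof -
  interpret prob_space "bern_space p" by (rule prob_bern)
  have cnn: "c i \<ge> 0" for i using c by (simp add: stake_seq_def)
  define part where "part n \<omega> = (\<Sum>i<n. c i * (if \<omega> i then 1 else 0 :: real))" for n \<omega>
  define A where "A n = {\<omega>. t < part (Suc n) \<omega>}" for n
  have partS: "part n \<omega> = stake_sum (\<lambda>i. if i < n then c i else 0) \<omega>" for n \<omega>
    unfolding stake_sum_def part_def by (subst suminf_finite[of "{..<n}"]) auto
  have Asets: "A n \<in> sets (bern_space p)" for n
    unfolding A_def partS by (rule sets_S)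
  have inc: "incseq A"
  proof (rule incseq_SucI)
    fix n show "A n \<subseteq> A (Suc n)"
      unfolding A_def part_def using cnn by (auto intro: less_le_trans)
  qed
  have U: "(\<Union>n. A n) = {\<omega>. t < stake_sum c \<omega>}"
  proof (intro set_eqI iffI)
    fix \<omega> assume "\<omega> \<in> (\<Union>n. A n)"
    then obtain n where "t < part (Suc n) \<omega>" by (auto simp: A_def)
    moreover have "part (Suc n) \<omega> \<le> stake_sum c \<omega>"
      unfolding part_def stake_sum_def
      by (rule sum_le_suminf[OF stake_summable[OF c]]) (auto simp: cnn)
    ultimately show "\<omega> \<in> {\<omega>. t < stake_sum c \<omega>}" by simp
  next
    fix \<omega> assume "\<omega> \<in> {\<omega>. t < stake_sum c \<omega>}"
    then have lt: "t < stake_sum c \<omega>" by simp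
    have "(\<lambda>n. part n \<omega>) \<longlonglongrightarrow> stake_sum c \<omega>"
      unfolding part_def stake_sum_def by (rule summable_LIMSEQ[OF stake_summable[OF c]])
    from order_tendstoD(1)[OF this lt] obtain N where "\<And>n. n \<ge> N \<Longrightarrow> t < part n \<omega>"
      by (auto simp: eventually_sequentially)
    then have "\<omega> \<in> A N" by (simp add: A_def)
    then show "\<omega> \<in> (\<Union>n. A n)" by blast
  qed
  have lim: "(\<lambda>n. measure (bern_space p) (A n)) \<longlonglongrightarrow> measure (bern_space p) (\<Union>n. A n)"
    by (rule finite_Lim_measure_incseq) (use Asets inc in auto)
  have "measure (bern_space p) (A n) \<le> B" for n
  proof -
    obtain c' where "finite_stake_seq c'" and "measure (bern_space p) (A n) \<le> win_prob p t c'"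
      using trunc[OF c, of p t n] unfolding A_def part_def by blast
    then show ?thesis using F by (meson order.trans)
  qed
  then have "measure (bern_space p) (\<Union>n. A n) \<le> B"
    by (intro LIMSEQ_le_const2[OF lim]) auto
  then show ?thesis using U by simp
qed

lemma atom_zero:
  assumes c: "stake_seq c" and pos: "\<And>i. c i > 0" and p: "0 < p" "p < 1"
  shows "measure (bern_space p) {\<omega>. stake_sum c \<omega> = t} = 0"
proof -
  have sc: "summable c" using c by (auto simp: stake_seq_def sums_iff)
  have lim0: "c \<longlonglongrightarrow> 0" by (rule summable_LIMSEQ_zero[OF sc])
  let ?q = "max p (1-p)"
  have le: "measure (bern_space p) {\<omega>. stake_sum c \<omega> = t} \<le> ?q ^ K" for K
  proof -
    obtain J where "lac c J" "card J = K" using lac_exists[OF pos lim0] by blast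
    then show ?thesis using atom_bound[OF c, of J p t] p by simp
  qed
  have "(\<lambda>K. ?q ^ K) \<longlonglongrightarrow> 0" by (rule LIMSEQ_power_zero) (use p in auto)
  note qlim = this
  have "measure (bern_space p) {\<omega>. stake_sum c \<omega> = t} \<le> 0"
    by (rule LIMSEQ_le_const[OF qlim]) (use le in auto)
  then show ?thesis using measure_nonneg[of "bern_space p"] by (meson order_antisym)
qed

lemma p0_zero:
  assumes t: "t > 0"
  shows "measure (bern_space 0) {\<omega>. t \<le> stake_sum c \<omega>} = 0"
proof -
  interpret prob_space "bern_space 0" by (rule prob_bern)
  define A where "A i = {\<omega>::nat\<Rightarrow>bool. \<omega> i = True}" for i
  have sub: "{\<omega>. t \<le> stake_sum c \<omega>} \<subseteq> (\<Union>i. A i)"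
  proof
    fix \<omega> assume "\<omega> \<in> {\<omega>. t \<le> stake_sum c \<omega>}"
    moreover have "\<omega> \<notin> (\<Union>i. A i) \<Longrightarrow> stake_sum c \<omega> = 0"
      by (auto simp: A_def stake_sum_def)
    ultimately show "\<omega> \<in> (\<Union>i. A i)" using t by force
  qed
  have "A i \<in> sets (bern_space 0)" for i unfolding A_def by (rule sets_coord)
  then have As: "range A \<subseteq> sets (bern_space 0)" by auto
  have A0: "measure (bern_space 0) (A i) = 0" for i
    using prob_coord[of 0 i True] by (simp add: A_def)
  have "measure (bern_space 0) {\<omega>. t \<le> stake_sum c \<omega>} \<le> measure (bern_space 0) (\<Union>i. A i)"
    by (rule finite_measure_mono[OF sub]) (use As in auto)
  also have "\<dots> \<le> (\<Sum>i. measure (bern_space 0) (A i))"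
    by (rule finite_measure_subadditive_countably[OF As]) (simp add: A0)
  also have "\<dots> = 0" by (simp add: A0)
  finally show ?thesis using measure_nonneg[of "bern_space 0"] by (meson order_antisym)
qed

definition e0 :: "nat \<Rightarrow> real" where "e0 i = (if i = 0 then 1 else 0)"

lemma e0_fin: "finite_stake_seq e0"
  unfolding finite_stake_seq_def stake_seq_def
proof (intro conjI allI)
  show "decseq e0" by (rule decseq_SucI) (simp add: e0_def)
  have "e0 = (\<lambda>r. if r = 0 then 1 else 0)" by (simp add: fun_eq_iff e0_def)
  then show "e0 sums 1" using sums_single[of 0 "\<lambda>_. 1::real"] by simp
  show "finite {i. e0 i \<noteq> 0}" by (rule finite_subset[of _ "{0}"]) (auto simp: e0_def)
qed (simp add: e0_def)

lemma e0_sum: "stake_sum e0 \<omega> = (if \<omega> 0 then 1 else 0)"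
  unfolding stake_sum_def by (subst suminf_finite[of "{0}"]) (auto simp: e0_def)

lemma e0_one:
  assumes "t \<le> 0 \<or> (p = 1 \<and> t \<le> 1)"
  shows "win_prob p t e0 = 1"
proof -
  interpret prob_space "bern_space p" by (rule prob_bern)
  show ?thesis
  proof (cases "t \<le> 0")
    case True
    then have "{\<omega> \<in> space (bern_space p). t \<le> stake_sum e0 \<omega>} = space (bern_space p)" by (auto simp: e0_sum)
    then show ?thesis unfolding win_prob_def by (simp only: prob_space)
  next
    case False
    then have p1: "p = 1" "t \<le> 1" using assms by auto
    have sub: "{\<omega>. \<omega> 0 = True} \<subseteq> {\<omega>. t \<le> stake_sum e0 \<omega>}" using p1 by (auto simp: e0_sum)
    have "measure (bern_space p) {\<omega>. \<omega> 0 = True} = 1" using prob_coord[of p 0 True] p1 by simp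
    then have "1 \<le> win_prob p t e0"
      unfolding win_prob_def using finite_measure_mono[OF sub sets_S(1)] by simp
    moreover have "win_prob p t e0 \<le> 1" unfolding win_prob_def by simp
    ultimately show ?thesis by simp
  qed
qed

lemma win_bounds: "0 \<le> win_prob p t c" "win_prob p t c \<le> 1"
proof -
  interpret prob_space "bern_space p" by (rule prob_bern)
  show "0 \<le> win_prob p t c" "win_prob p t c \<le> 1" unfolding win_prob_def by simp_all
qed




lemma key:
  assumes p: "0 \<le> p" "p \<le> t" "t \<le> 1" and c: "stake_seq c"
    and F: "\<And>c'. finite_stake_seq c' \<Longrightarrow> win_prob p t c' \<le> B"
  shows "win_prob p t c \<le> B"
proof -
  interpret prob_space "bern_space p" by (rule prob_bern)
  have cnn: "c i \<ge> 0" for i using c by (simp add: stake_seq_def)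
  have e0B: "win_prob p t e0 \<le> B" by (rule F[OF e0_fin])
  show ?thesis
  proof (cases "finite {i. c i \<noteq> 0}")
    case True
    then show ?thesis using F c by (simp add: finite_stake_seq_def)
  next
    case inf: False
    show ?thesis
    proof (cases "t \<le> 0 \<or> p = 1")
      case True
      then have "win_prob p t e0 = 1" using p by (intro e0_one) auto
      then show ?thesis using e0B win_bounds(2)[of p t c] by simp
    next
      case False
      then have tpos: "t > 0" and p1: "p < 1" using p by auto
      show ?thesis
      proof (cases "p = 0")
        case True
        then have "win_prob p t c = 0"
          using p0_zero[OF tpos, of c] by (simp add: win_prob_def)
        then show ?thesis using e0B win_bounds(1)[of p t e0] by simp
      next
        case False
        then have p0: "p > 0" using p by simp
        have pos: "c i > 0" for i
        proof (rule ccontr)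
          assume "\<not> c i > 0"
          then have ci: "c i = 0" using cnn[of i] by simp
          have jz: "c j = 0" if "j \<ge> i" for j
            using c that ci cnn[of j] by (auto simp: stake_seq_def decseq_def) (metis order_antisym)
          have "j < i" if "c j \<noteq> 0" for j
          proof (rule ccontr)
            assume "\<not> j < i"
            then have "i \<le> j" by simp
            then show False using jz[of j] that by simp
          qed
          then have "{i. c i \<noteq> 0} \<subseteq> {..<i}" by auto
          then show False using inf finite_subset by blast
        qed
        have eq: "{\<omega> \<in> space (bern_space p). t \<le> stake_sum c \<omega>}
            = {\<omega>. t < stake_sum c \<omega>} \<union> {\<omega>. stake_sum c \<omega> = t}" by auto
        have "win_prob p t c = prob {\<omega>. t < stake_sum c \<omega>} + prob {\<omega>. stake_sum c \<omega> = t}"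
          unfolding win_prob_def eq by (rule finite_measure_Union) (auto intro: sets_S)
        also have "prob {\<omega>. stake_sum c \<omega> = t} = 0" by (rule atom_zero[OF c pos p0 p1])
        also have "prob {\<omega>. t < stake_sum c \<omega>} \<le> B" by (rule gt_bound[OF c F])
        finally show ?thesis by simp
      qed
    qed
  qed
qed

theorem proposition6:
  fixes p t :: real
  assumes "0 \<le> p" and "p \<le> t" and "t \<le> 1"
  shows "pi_fun p t = Sup {win_prob p t c | c. finite_stake_seq c}"
proof -
  define F where "F = {win_prob p t c | c. finite_stake_seq c}"
  define AS where "AS = {win_prob p t c | c. stake_seq c}"
  have FA: "F \<subseteq> AS" by (auto simp: F_def AS_def finite_stake_seq_def)
  have Fne: "F \<noteq> {}" using e0_fin by (auto simp: F_def)
  have bA: "bdd_above AS" by (rule bdd_aboveI[of _ 1]) (auto simp: AS_def win_bounds)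
  have bF: "bdd_above F" by (rule bdd_aboveI[of _ 1]) (auto simp: F_def win_bounds)
  have ub: "win_prob p t c' \<le> Sup F" if "finite_stake_seq c'" for c'
    by (rule cSup_upper[OF _ bF]) (use that in \<open>auto simp: F_def\<close>)
  have "Sup AS \<le> Sup F"
  proof (rule cSup_least)
    show "AS \<noteq> {}" using Fne FA by blast
    fix x assume "x \<in> AS"
    then obtain c where "stake_seq c" "x = win_prob p t c" by (auto simp: AS_def)
    then show "x \<le> Sup F" using key[OF assms, of c "Sup F"] ub by simp
  qed
  moreover have "Sup F \<le> Sup AS" by (rule cSup_subset_mono[OF Fne bA FA])
  ultimately show ?thesis by (simp add: pi_fun_def F_def AS_def)
qed


end
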